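(* Suppose $n$ qubits are distributed among a finite set of parties $M$, $n=\sum_{\alpha\in M}n_\alpha$, and let $S,S'\subseteq G^n$ be arbitrary linear subspaces. The following are equivalent: (1) there exist $u_\alpha\in\mathrm{Sp}(n_\alpha)$, $\alpha\in M$, such that $S'=\big(\bigoplus_{\alpha\in M}u_\alpha\big)\cdot S$, where the direct sum refers to the decomposition $G^n=\bigoplus_{\alpha\in M}G^{n_\alpha}$ into the parties' local subspaces; (2) there exists a linear invertible map $T:S\to S'$ such that (i) $\omega(T(f)_\alpha,T(g)_\alpha)=\omega(f_\alpha,g_\alpha)$ for all $f,g\in S$ and $\alpha\in M$, and (ii) $T\cdot S_{\hat\alpha}=S'_{\hat\alpha}$ for all $\alpha\in M$.
   Context: Let $G^n\cong\mathbb{F}_2^{2n}$, with elements written $f=(a_1,b_1,\dots,a_n,b_n)$, equipped with the symplectic form $\omega(f,f')=\sum_{j=1}^n(a_jb_j'+b_ja_j')\bmod 2$. $\mathrm{Sp}(n)$ denotes the group of linear bijections $u:G^n\to G^n$ with $\omega(u(f),u(g))=\omega(f,g)$ for all $f,g$. When party $\alpha\in M$ holds $n_\alpha$ of the $n$ qubits, $G^n=\bigoplus_\alpha G^{n_\alpha}$ (coordinates $(a_j,b_j)$ grouped by the owner of qubit $j$), $f_\alpha\in G^{n_\alpha}$ denotes the component of $f$ for party $\alpha$, and $\omega(f_\alpha,g_\alpha)$ is the symplectic form of $G^{n_\alpha}$. For a subspace $S\subseteq G^n$, the co-local subspace is $S_{\hat\alpha}=\{g\in S:g_\alpha=0\}$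 (equal to $S$ if $n_\alpha=0$). *)

theory Defs
  imports Main "HOL-Library.Z2"
begin

text \<open>An element f of G^n = F_2^{2n} is represented as a function from qubit indices to
  pairs (a_j, b_j) over the two-element field bit, vanishing for j >= n.\<close>

type_synonym pvec = "nat \<Rightarrow> bit \<times> bit"

definition zerov :: pvec where "zerov = (\<lambda>j. (0, 0))"

definition vadd :: "pvec \<Rightarrow> pvec \<Rightarrow> pvec" where
  "vadd f g = (\<lambda>j. (fst (f j) + fst (g j), snd (f j) + snd (g j)))"

definition smul :: "bit \<Rightarrow> pvec \<Rightarrow> pvec" where
  "smul c f = (\<lambda>j. (c * fst (f j), c * snd (f j)))"

definition GJ :: "nat set \<Rightarrow> pvec set" where
  "GJ J = {f. \<forall>j. j \<notin> J \<longrightarrow> f j = (0, 0)}"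

abbreviation Gn :: "nat \<Rightarrow> pvec set" where
  "Gn n \<equiv> GJ {..<n}"

definition omegaJ :: "nat set \<Rightarrow> pvec \<Rightarrow> pvec \<Rightarrow> bit" where
  "omegaJ J f g = (\<Sum>j\<in>J. fst (f j) * snd (g j) + snd (f j) * fst (g j))"

definition lin_subspace :: "nat \<Rightarrow> pvec set \<Rightarrow> bool" where
  "lin_subspace n S \<longleftrightarrow> S \<subseteq> Gn n \<and> zerov \<in> S \<and>
     (\<forall>f\<in>S. \<forall>g\<in>S. vadd f g \<in> S) \<and> (\<forall>c. \<forall>f\<in>S. smul c f \<in> S)"

definition linear_on :: "pvec set \<Rightarrow> (pvec \<Rightarrow> pvec) \<Rightarrow> bool" where
  "linear_on S T \<longleftrightarrow> (\<forall>f\<in>S. \<forall>g\<in>S. T (vadd f g) = vadd (T f) (T g)) \<and>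
     (\<forall>c. \<forall>f\<in>S. T (smul c f) = smul c (T f))"

definition SpJ :: "nat set \<Rightarrow> (pvec \<Rightarrow> pvec) set" where
  "SpJ J = {u. bij_betw u (GJ J) (GJ J) \<and> linear_on (GJ J) u \<and>
     (\<forall>f\<in>GJ J. \<forall>g\<in>GJ J. omegaJ J (u f) (u g) = omegaJ J f g)}"

definition qubits :: "nat \<Rightarrow> (nat \<Rightarrow> 'p) \<Rightarrow> 'p \<Rightarrow> nat set" where
  "qubits n own \<alpha> = {j. j < n \<and> own j = \<alpha>}"

definition restr :: "nat set \<Rightarrow> pvec \<Rightarrow> pvec" where
  "restr J f = (\<lambda>j. if j \<in> J then f j else (0, 0))"

text \<open>Direct sum of local maps: (\<Oplus> u_alpha)(f) = \<Sum>_alpha u_alpha(f_alpha).\<close>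
definition dsum :: "nat \<Rightarrow> (nat \<Rightarrow> 'p) \<Rightarrow> ('p \<Rightarrow> pvec \<Rightarrow> pvec) \<Rightarrow> pvec \<Rightarrow> pvec" where
  "dsum n own u f = (\<lambda>j. if j < n then u (own j) (restr (qubits n own (own j)) f) j else (0, 0))"

definition coloc :: "nat \<Rightarrow> (nat \<Rightarrow> 'p) \<Rightarrow> pvec set \<Rightarrow> 'p \<Rightarrow> pvec set" where
  "coloc n own S \<alpha> = {g \<in> S. restr (qubits n own \<alpha>) g = zerov}"

end

theory Submission
  imports Defs "HOL-Library.FuncSet"
begin

declare add_bit_eq_xor[simp del] mult_bit_eq_and[simp del]

lemma bit_add_self[simp]: "(x::bit) + x = 0"
  by (cases x) auto

lemma vadd_comm: "vadd f g = vadd g f"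
  by (simp add: vadd_def add.commute)
lemma vadd_assoc: "vadd (vadd f g) h = vadd f (vadd g h)"
  by (simp add: vadd_def add.assoc)
lemma vadd_zero[simp]: "vadd zerov f = f" "vadd f zerov = f"
  by (simp_all add: vadd_def zerov_def)
lemma vadd_self[simp]: "vadd f f = zerov"
  by (simp add: vadd_def zerov_def)
lemma vadd_cancel[simp]: "vadd f (vadd f g) = g" "vadd (vadd g f) f = g"
  by (simp_all add: vadd_def add.assoc[symmetric])
lemma vadd_left_commute: "vadd f (vadd g h) = vadd g (vadd f h)"
  by (simp add: vadd_def ac_simps)

lemmas vadd_ac = vadd_assoc vadd_comm vadd_left_commute

lemma vadd_eq_zero_iff: "vadd f g = zerov \<longleftrightarrow> f = g"
proof
  assume "vadd f g = zerov"
  then have "vadd f (vadd f g) = vadd f zerov" by simp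
  then show "f = g" by simp
qed simp

lemma smul_0[simp]: "smul 0 f = zerov" by (simp add: smul_def zerov_def)
lemma smul_1[simp]: "smul 1 f = f" by (simp add: smul_def)

lemma omega_add_left: "omegaJ J (vadd f g) h = omegaJ J f h + omegaJ J g h"
  by (simp add: omegaJ_def vadd_def sum.distrib[symmetric] algebra_simps)
lemma omega_sym: "omegaJ J f g = omegaJ J g f"
  by (simp add: omegaJ_def algebra_simps)
lemma omega_add_right: "omegaJ J h (vadd f g) = omegaJ J h f + omegaJ J h g"
  by (metis omega_add_left omega_sym)
lemma omega_self[simp]: "omegaJ J f f = 0"
proof -
  have "\<And>x y::bit. x * y + y * x = 0" by (simp add: mult.commute)
  then show ?thesis by (simp add: omegaJ_def)
qed
lemma omega_zero[simp]: "omegaJ J zerov f = 0" "omegaJ J f zerov = 0"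
  by (simp_all add: omegaJ_def zerov_def)

lemma restr_omega: "omegaJ J (restr J f) g = omegaJ J f g" "omegaJ J f (restr J g) = omegaJ J f g"
  by (simp_all add: omegaJ_def restr_def)

lemma GJ_vadd: "f \<in> GJ J \<Longrightarrow> g \<in> GJ J \<Longrightarrow> vadd f g \<in> GJ J"
  by (simp add: GJ_def vadd_def)
lemma GJ_zero[simp]: "zerov \<in> GJ J"
  by (simp add: GJ_def zerov_def)
lemma restr_GJ[simp]: "restr J f \<in> GJ J"
  by (simp add: GJ_def restr_def)
lemma restr_vadd: "restr J (vadd f g) = vadd (restr J f) (restr J g)"
  by (auto simp add: restr_def vadd_def)
lemma restr_zero[simp]: "restr J zerov = zerov"
  by (auto simp add: restr_def zerov_def)
lemma restr_id: "f \<in> GJ J \<Longrightarrow> restr J f = f"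
  by (auto simp add: restr_def GJ_def)

lemma bit_UNIV: "(UNIV::bit set) = {0,1}"
  by (auto intro: bit.exhaust)

lemma finite_bit_UNIV[simp]: "finite (UNIV::bit set)"
  by (simp add: bit_UNIV)

lemma finite_bb_UNIV[simp]: "finite (UNIV::(bit\<times>bit) set)"
  by (simp flip: UNIV_Times_UNIV)

lemma finite_GJ: assumes "finite J" shows "finite (GJ J)"
proof -
  have "GJ J \<subseteq> (\<lambda>g j. if j \<in> J then g j else (0,0)) ` (PiE J (\<lambda>_. UNIV :: (bit\<times>bit) set))"
  proof
    fix f assume f: "f \<in> GJ J"
    have "restrict f J \<in> PiE J (\<lambda>_. UNIV)" by simp
    moreover have "f = (\<lambda>j. if j \<in> J then restrict f J j else (0,0))"
      using f by (auto simp: GJ_def fun_eq_iff)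
    ultimately show "f \<in> (\<lambda>g j. if j \<in> J then g j else (0,0)) ` (PiE J (\<lambda>_. UNIV))" by blast
  qed
  moreover have "finite (PiE J (\<lambda>_. UNIV :: (bit\<times>bit) set))"
    using assms by (intro finite_PiE) auto
  ultimately show ?thesis using finite_subset by blast
qed


definition subsp :: "nat set \<Rightarrow> pvec set \<Rightarrow> bool" where
  "subsp J A \<longleftrightarrow> A \<subseteq> GJ J \<and> zerov \<in> A \<and> (\<forall>x\<in>A. \<forall>y\<in>A. vadd x y \<in> A)"

definition addv :: "pvec set \<Rightarrow> (pvec \<Rightarrow> bit) \<Rightarrow> bool" where
  "addv A \<mu> \<longleftrightarrow> (\<forall>x\<in>A. \<forall>y\<in>A. \<mu> (vadd x y) = \<mu> x + \<mu> y)"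

definition addp :: "pvec set \<Rightarrow> (pvec \<Rightarrow> pvec) \<Rightarrow> bool" where
  "addp A \<phi> \<longleftrightarrow> (\<forall>x\<in>A. \<forall>y\<in>A. \<phi> (vadd x y) = vadd (\<phi> x) (\<phi> y))"

definition adj :: "pvec \<Rightarrow> pvec set \<Rightarrow> pvec set" where
  "adj v A = A \<union> vadd v ` A"

lemma addv_zero: "addv A \<mu> \<Longrightarrow> zerov \<in> A \<Longrightarrow> \<mu> zerov = 0"
proof -
  assume a: "addv A \<mu>" "zerov \<in> A"
  then have "\<mu> (vadd zerov zerov) = \<mu> zerov + \<mu> zerov" unfolding addv_def by blast
  then show ?thesis by simp
qed

lemma addp_zero: "addp A \<phi> \<Longrightarrow> zerov \<in> A \<Longrightarrow> \<phi> zerov = zerov"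
proof -
  assume a: "addp A \<phi>" "zerov \<in> A"
  then have "\<phi> (vadd zerov zerov) = vadd (\<phi> zerov) (\<phi> zerov)" unfolding addp_def by blast
  then show ?thesis by simp
qed

lemma grow:
  assumes "finite V" "Q A0" "A0 \<subseteq> V"
    and step: "\<And>A. Q A \<Longrightarrow> A \<subseteq> V \<Longrightarrow> A \<noteq> V \<Longrightarrow> \<exists>A'. A \<subset> A' \<and> A' \<subseteq> V \<and> Q A'"
  shows "Q V"
  using assms(2,3)
proof (induction "card (V - A0)" arbitrary: A0 rule: less_induct)
  case less
  show ?case
  proof (cases "A0 = V")
    case True then show ?thesis using less.prems by simp
  next
    case False
    then obtain A' where A': "A0 \<subset> A'" "A' \<subseteq> V" "Q A'" using step[OF less.prems(1) less.prems(2) False] by blast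
    obtain x where x: "x \<in> A'" "x \<notin> A0" using A'(1) by blast
    have "V - A' \<subset> V - A0" using A' x by blast
    then have "card (V - A') < card (V - A0)"
      using assms(1) by (intro psubset_card_mono) auto
    then show ?thesis using less.hyps A'(2,3) by simp
  qed
qed

lemma adj_props:
  assumes "subsp J A" "v \<in> GJ J" "v \<notin> A"
  shows "subsp J (adj v A)" "A \<subset> adj v A"
proof -
  have AV: "A \<subseteq> GJ J" and z: "zerov \<in> A" and cl: "\<And>x y. x\<in>A \<Longrightarrow> y\<in>A \<Longrightarrow> vadd x y \<in> A"
    using assms(1) by (auto simp: subsp_def)
  show "A \<subset> adj v A" using assms z by (auto simp: adj_def intro!: image_eqI[of v _ zerov])
  show "subsp J (adj v A)"
    unfolding subsp_def adj_def
  proof (intro conjI ballI)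
    show "A \<union> vadd v ` A \<subseteq> GJ J" using AV assms(1,2) GJ_vadd by (auto simp: subsp_def)
    show "zerov \<in> A \<union> vadd v ` A" using z by simp
    fix x y assume x: "x \<in> A \<union> vadd v ` A" and y: "y \<in> A \<union> vadd v ` A"
    show "vadd x y \<in> A \<union> vadd v ` A"
    proof -
      { fix a b assume "a \<in> A" "b \<in> A"
        have "vadd a (vadd v b) = vadd v (vadd a b)" by (simp add: vadd_ac)
        moreover have "vadd (vadd v a) (vadd v b) = vadd a b" by (simp add: vadd_ac)
        ultimately have "vadd a (vadd v b) \<in> vadd v ` A" "vadd (vadd v a) (vadd v b) \<in> A"
                        "vadd (vadd v a) b \<in> vadd v ` A"
          using cl \<open>a\<in>A\<close> \<open>b\<in>A\<close> by (auto simp: vadd_assoc) }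
      then show ?thesis using x y cl by blast
    qed
  qed
qed

lemma adj_out: "x \<in> adj v A \<Longrightarrow> x \<notin> A \<Longrightarrow> vadd v x \<in> A"
  by (auto simp: adj_def)

lemma addv_adj:
  assumes "subsp J A" "v \<notin> A" "addv A \<mu>"
  shows "addv (adj v A) (\<lambda>x. if x \<in> A then \<mu> x else c + \<mu> (vadd v x))"
  unfolding addv_def
proof (intro ballI)
  have cl: "\<And>x y. x\<in>A \<Longrightarrow> y\<in>A \<Longrightarrow> vadd x y \<in> A" using assms(1) by (auto simp: subsp_def)
  have m: "\<And>x y. x\<in>A \<Longrightarrow> y\<in>A \<Longrightarrow> \<mu> (vadd x y) = \<mu> x + \<mu> y" using assms(3) by (auto simp: addv_def)
  fix x y assume x: "x \<in> adj v A" and y: "y \<in> adj v A"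
  consider "x \<in> A" "y \<in> A" | "x \<in> A" "y \<notin> A" | "x \<notin> A" "y \<in> A" | "x \<notin> A" "y \<notin> A" by blast
  then show "(if vadd x y \<in> A then \<mu> (vadd x y) else c + \<mu> (vadd v (vadd x y))) =
    (if x \<in> A then \<mu> x else c + \<mu> (vadd v x)) + (if y \<in> A then \<mu> y else c + \<mu> (vadd v y))"
  proof cases
    case 1 then show ?thesis using cl m by simp
  next
    case 2
    have yv: "vadd v y \<in> A" using adj_out y 2 by blast
    have nA: "vadd x y \<notin> A" using 2 cl by (metis vadd_cancel(1))
    have e: "vadd v (vadd x y) = vadd x (vadd v y)" by (simp add: vadd_ac)
    have "c + \<mu> (vadd v (vadd x y)) = \<mu> x + (c + \<mu> (vadd v y))"
      unfolding e using m[OF 2(1) yv] by (simp only: ac_simps)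
    then show ?thesis using 2 nA by simp
  next
    case 3
    have xv: "vadd v x \<in> A" using adj_out x 3 by blast
    have nA: "vadd x y \<notin> A" using 3 cl by (metis vadd_cancel(2))
    have e: "vadd v (vadd x y) = vadd (vadd v x) y" by (simp add: vadd_ac)
    have "c + \<mu> (vadd v (vadd x y)) = (c + \<mu> (vadd v x)) + \<mu> y"
      unfolding e using m[OF xv 3(2)] by (simp only: ac_simps)
    then show ?thesis using 3 nA by simp
  next
    case 4
    have xv: "vadd v x \<in> A" using adj_out x 4 by blast
    have yv: "vadd v y \<in> A" using adj_out y 4 by blast
    have e: "vadd x y = vadd (vadd v x) (vadd v y)" by (simp add: vadd_ac)
    have "vadd x y \<in> A" using e cl xv yv by simp
    then have "\<mu> (vadd x y) = \<mu> (vadd v x) + \<mu> (vadd v y)" using e m xv yv by simp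
    moreover have "c + \<mu> (vadd v x) + (c + \<mu> (vadd v y)) = \<mu> (vadd v x) + \<mu> (vadd v y)"
    proof -
      have "c + \<mu> (vadd v x) + (c + \<mu> (vadd v y)) = (c + c) + (\<mu> (vadd v x) + \<mu> (vadd v y))"
        by (simp only: ac_simps)
      then show ?thesis by simp
    qed
    ultimately show ?thesis using 4 \<open>vadd x y \<in> A\<close> by (simp add: add.assoc)
  qed
qed


lemma addv_ext:
  assumes "finite J" "subsp J A" "addv A \<mu>"
  shows "\<exists>\<mu>'. addv (GJ J) \<mu>' \<and> (\<forall>a\<in>A. \<mu>' a = \<mu> a)"
proof -
  let ?Q = "\<lambda>B. subsp J B \<and> A \<subseteq> B \<and> (\<exists>\<mu>'. addv B \<mu>' \<and> (\<forall>a\<in>A. \<mu>' a = \<mu> a))"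
  have "?Q (GJ J)"
  proof (rule grow[where Q = ?Q])
    show "finite (GJ J)" using assms(1) by (rule finite_GJ)
    show "?Q A" using assms by blast
    show "A \<subseteq> GJ J" using assms(2) by (simp add: subsp_def)
    fix B assume Q: "?Q B" and BV: "B \<subseteq> GJ J" "B \<noteq> GJ J"
    then obtain v where v: "v \<in> GJ J" "v \<notin> B" by blast
    obtain \<mu>' where \<mu>': "addv B \<mu>'" "\<forall>a\<in>A. \<mu>' a = \<mu> a" using Q by blast
    have s: "subsp J (adj v B)" "B \<subset> adj v B" using adj_props[of J B v] Q v by auto
    have a: "addv (adj v B) (\<lambda>x. if x \<in> B then \<mu>' x else 0 + \<mu>' (vadd v x))"
      using addv_adj[of J B v \<mu>' 0] Q v \<mu>' by blast
    have "\<forall>a\<in>A. (\<lambda>x. if x \<in> B then \<mu>' x else 0 + \<mu>' (vadd v x)) a = \<mu> a"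
      using Q \<mu>'(2) by auto
    then have "?Q (adj v B)" using s a Q by blast
    then show "\<exists>A'. B \<subset> A' \<and> A' \<subseteq> GJ J \<and> ?Q A'"
      using s by (auto simp: subsp_def)
  qed
  then show ?thesis by blast
qed

definition Ea :: "nat \<Rightarrow> pvec" where "Ea j = (\<lambda>k. if k = j then (1, 0) else (0, 0))"
definition Eb :: "nat \<Rightarrow> pvec" where "Eb j = (\<lambda>k. if k = j then (0, 1) else (0, 0))"

lemma restr_single: "restr {j} g = vadd (smul (fst (g j)) (Ea j)) (smul (snd (g j)) (Eb j))"
  by (auto simp: restr_def vadd_def smul_def Ea_def Eb_def fun_eq_iff)

lemma restr_insert: "j \<notin> K \<Longrightarrow> restr (insert j K) g = vadd (restr K g) (restr {j} g)"
  by (auto simp: restr_def vadd_def fun_eq_iff)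

lemma restr_empty: "restr {} g = zerov"
  by (simp add: restr_def zerov_def fun_eq_iff)

lemma GJ_mono: "K \<subseteq> J \<Longrightarrow> GJ K \<subseteq> GJ J"
  by (auto simp: GJ_def)

lemma smul_in: "x \<in> GJ J \<Longrightarrow> smul c x \<in> GJ J"
  by (cases c) auto

lemma addv_smul: "addv V \<mu> \<Longrightarrow> zerov \<in> V \<Longrightarrow> \<mu> (smul c x) = c * \<mu> x"
  by (cases c) (auto simp: addv_zero)

lemma Ea_in: "j \<in> J \<Longrightarrow> Ea j \<in> GJ J" by (simp add: Ea_def GJ_def)
lemma Eb_in: "j \<in> J \<Longrightarrow> Eb j \<in> GJ J" by (simp add: Eb_def GJ_def)

lemma decomp:
  assumes "finite K" "K \<subseteq> J" "addv (GJ J) \<mu>"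
  shows "\<mu> (restr K g) = (\<Sum>j\<in>K. fst (g j) * \<mu> (Ea j) + snd (g j) * \<mu> (Eb j))"
  using assms
proof (induction K rule: finite_induct)
  case empty
  then show ?case using addv_zero[OF empty(2)] by (simp add: restr_empty)
next
  case (insert j K)
  have m: "\<And>x y. x \<in> GJ J \<Longrightarrow> y \<in> GJ J \<Longrightarrow> \<mu> (vadd x y) = \<mu> x + \<mu> y"
    using insert.prems(2) by (simp add: addv_def)
  have jJ: "j \<in> J" using insert.prems by simp
  have r1: "restr K g \<in> GJ J" using GJ_mono[of K J] insert.prems by auto
  have r2: "restr {j} g \<in> GJ J" using GJ_mono[of "{j}" J] jJ by auto
  have "\<mu> (restr {j} g) = fst (g j) * \<mu> (Ea j) + snd (g j) * \<mu> (Eb j)"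
    unfolding restr_single
    using m[OF smul_in[OF Ea_in[OF jJ]] smul_in[OF Eb_in[OF jJ]]]
      addv_smul[OF insert.prems(2) GJ_zero] by simp
  moreover have "\<mu> (restr (insert j K) g) = \<mu> (restr K g) + \<mu> (restr {j} g)"
    using restr_insert[OF insert.hyps(2)] m[OF r1 r2] by simp
  ultimately show ?case using insert by (simp add: add.commute)
qed

lemma rep_full:
  assumes "finite J" "addv (GJ J) \<mu>"
  shows "\<exists>v\<in>GJ J. \<forall>g\<in>GJ J. omegaJ J v g = \<mu> g"
proof
  let ?v = "\<lambda>k. if k \<in> J then (\<mu> (Eb k), \<mu> (Ea k)) else (0, 0)"
  show "?v \<in> GJ J" by (simp add: GJ_def)
  show "\<forall>g\<in>GJ J. omegaJ J ?v g = \<mu> g"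
  proof
    fix g assume g: "g \<in> GJ J"
    have "\<mu> g = \<mu> (restr J g)" using restr_id[OF g] by simp
    also have "\<dots> = (\<Sum>j\<in>J. fst (g j) * \<mu> (Ea j) + snd (g j) * \<mu> (Eb j))"
      using decomp[OF assms(1) order_refl assms(2)] .
    also have "\<dots> = omegaJ J ?v g"
      unfolding omegaJ_def by (intro sum.cong) (auto simp: ac_simps)
    finally show "omegaJ J ?v g = \<mu> g" ..
  qed
qed

lemma rep:
  assumes "finite J" "subsp J A" "addv A \<mu>"
  shows "\<exists>v\<in>GJ J. \<forall>a\<in>A. omegaJ J v a = \<mu> a"
proof -
  obtain \<mu>' where "addv (GJ J) \<mu>'" "\<forall>a\<in>A. \<mu>' a = \<mu> a" using addv_ext[OF assms] by blast
  moreover have "A \<subseteq> GJ J" using assms(2) by (simp add: subsp_def)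
  ultimately show ?thesis using rep_full[OF assms(1)] by (metis subsetD)
qed


definition iso :: "nat set \<Rightarrow> pvec set \<Rightarrow> (pvec \<Rightarrow> pvec) \<Rightarrow> bool" where
  "iso J A \<phi> \<longleftrightarrow> addp A \<phi> \<and> inj_on \<phi> A \<and> \<phi> ` A \<subseteq> GJ J \<and>
     (\<forall>x\<in>A. \<forall>y\<in>A. omegaJ J (\<phi> x) (\<phi> y) = omegaJ J x y)"

lemma iso_image_subsp:
  assumes "subsp J A" "iso J A \<phi>"
  shows "subsp J (\<phi> ` A)"
proof -
  have z: "zerov \<in> A" using assms(1) by (simp add: subsp_def)
  have "\<phi> zerov = zerov" using addp_zero[OF _ z] assms(2) by (simp add: iso_def)
  then have "zerov \<in> \<phi> ` A" using z by force
  moreover have "\<forall>x\<in>\<phi> ` A. \<forall>y\<in>\<phi> ` A. vadd x y \<in> \<phi> ` A"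
  proof (intro ballI)
    fix x y assume "x \<in> \<phi> ` A" "y \<in> \<phi> ` A"
    then obtain a b where ab: "a \<in> A" "b \<in> A" "x = \<phi> a" "y = \<phi> b" by blast
    then have "vadd x y = \<phi> (vadd a b)" using assms(2) by (simp add: iso_def addp_def)
    moreover have "vadd a b \<in> A" using ab assms(1) by (simp add: subsp_def)
    ultimately show "vadd x y \<in> \<phi> ` A" by blast
  qed
  ultimately show ?thesis using assms(2) by (simp add: subsp_def iso_def)
qed

lemma witt_pair:
  assumes J: "finite J" and A: "subsp J A" "A \<noteq> GJ J" and iso: "iso J A \<phi>"
  shows "\<exists>v w. v \<in> GJ J \<and> v \<notin> A \<and> w \<in> GJ J \<and> w \<notin> \<phi> ` A \<and>
           (\<forall>a\<in>A. omegaJ J w (\<phi> a) = omegaJ J v a)"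
    (is "\<exists>v w. ?P v w")
proof -
  let ?B = "\<phi> ` A"
  have AV: "A \<subseteq> GJ J" using A by (simp add: subsp_def)
  have Acl: "\<And>x y. x \<in> A \<Longrightarrow> y \<in> A \<Longrightarrow> vadd x y \<in> A" using A by (simp add: subsp_def)
  have B: "subsp J ?B" using iso_image_subsp[OF A(1) iso] .
  have BV: "?B \<subseteq> GJ J" using B by (simp add: subsp_def)
  have Bcl: "\<And>x y. x \<in> ?B \<Longrightarrow> y \<in> ?B \<Longrightarrow> vadd x y \<in> ?B" using B unfolding subsp_def by blast
  have inj: "inj_on \<phi> A" and ad: "\<And>x y. x\<in>A \<Longrightarrow> y\<in>A \<Longrightarrow> \<phi> (vadd x y) = vadd (\<phi> x) (\<phi> y)"
    and om: "\<And>x y. x\<in>A \<Longrightarrow> y\<in>A \<Longrightarrow> omegaJ J (\<phi> x) (\<phi> y) = omegaJ J x y"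
    using iso by (auto simp: iso_def addp_def)
  have fin: "finite (GJ J)" using finite_GJ[OF J] .
  have "card A < card (GJ J)" using AV A(2) fin by (simp add: psubset_card_mono)
  moreover have "card ?B = card A" using card_image[OF inj] .
  ultimately have "?B \<noteq> GJ J" by auto
  have one: "(\<exists>v w. ?P v w) \<or> (\<exists>r. r \<in> GJ J \<and> r \<notin> A \<and> (\<forall>a\<in>A. omegaJ J r a = 0))"
  proof -
    obtain v0 where v0: "v0 \<in> GJ J" "v0 \<notin> A" using AV A(2) by blast
    let ?\<psi> = "the_inv_into A \<phi>"
    let ?\<mu> = "\<lambda>b. omegaJ J v0 (?\<psi> b)"
    have psi: "\<And>a. a \<in> A \<Longrightarrow> ?\<psi> (\<phi> a) = a" using the_inv_into_f_f[OF inj] by blast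
    have "addv ?B ?\<mu>"
      unfolding addv_def
    proof (intro ballI)
      fix x y assume "x \<in> ?B" "y \<in> ?B"
      then obtain a b where ab: "a \<in> A" "b \<in> A" "x = \<phi> a" "y = \<phi> b" by blast
      have "vadd x y = \<phi> (vadd a b)" using ab ad by simp
      then show "?\<mu> (vadd x y) = ?\<mu> x + ?\<mu> y"
        using ab psi Acl by (simp add: omega_add_right)
    qed
    then obtain w0 where w0: "w0 \<in> GJ J" "\<forall>b\<in>?B. omegaJ J w0 b = ?\<mu> b"
      using rep[OF J B] by blast
    then have w0': "\<forall>a\<in>A. omegaJ J w0 (\<phi> a) = omegaJ J v0 a" using psi by simp
    show ?thesis
    proof (cases "w0 \<in> ?B")
      case False
      then show ?thesis using v0 w0 w0' by blast
    next
      case True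
      then obtain a0 where a0: "a0 \<in> A" "w0 = \<phi> a0" by blast
      let ?r = "vadd v0 a0"
      have "?r \<in> GJ J" using v0 a0 AV GJ_vadd by blast
      moreover have "?r \<notin> A"
      proof
        assume "?r \<in> A"
        then have "vadd ?r a0 \<in> A" using Acl a0 by blast
        then show False using v0 by simp
      qed
      moreover have "\<forall>a\<in>A. omegaJ J ?r a = 0"
      proof
        fix a assume a: "a \<in> A"
        have "omegaJ J ?r a = omegaJ J v0 a + omegaJ J a0 a" by (simp add: omega_add_left)
        also have "\<dots> = omegaJ J w0 (\<phi> a) + omegaJ J w0 (\<phi> a)"
          using w0' a a0 om by simp
        finally show "omegaJ J ?r a = 0" by simp
      qed
      ultimately show ?thesis by blast
    qed
  qed
  have two: "(\<exists>v w. ?P v w) \<or> (\<exists>s. s \<in> GJ J \<and> s \<notin> ?B \<and> (\<forall>a\<in>A. omegaJ J s (\<phi> a) = 0))"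
  proof -
    obtain w1 where w1: "w1 \<in> GJ J" "w1 \<notin> ?B" using BV \<open>?B \<noteq> GJ J\<close> by blast
    let ?\<mu> = "\<lambda>a. omegaJ J w1 (\<phi> a)"
    have "addv A ?\<mu>"
      unfolding addv_def using ad by (simp add: omega_add_right)
    then obtain v1 where v1: "v1 \<in> GJ J" "\<forall>a\<in>A. omegaJ J v1 a = ?\<mu> a"
      using rep[OF J A(1)] by blast
    show ?thesis
    proof (cases "v1 \<in> A")
      case False
      then show ?thesis using v1 w1 by force
    next
      case True
      let ?s = "vadd w1 (\<phi> v1)"
      have "?s \<in> GJ J" using w1 True BV GJ_vadd by blast
      moreover have "?s \<notin> ?B"
      proof
        assume "?s \<in> ?B"
        then have "vadd ?s (\<phi> v1) \<in> ?B" using Bcl True by blast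
        then show False using w1 by simp
      qed
      moreover have "\<forall>a\<in>A. omegaJ J ?s (\<phi> a) = 0"
      proof
        fix a assume a: "a \<in> A"
        have "omegaJ J ?s (\<phi> a) = omegaJ J w1 (\<phi> a) + omegaJ J (\<phi> v1) (\<phi> a)"
          by (simp add: omega_add_left)
        also have "\<dots> = omegaJ J v1 a + omegaJ J v1 a"
          using v1 a True om by simp
        finally show "omegaJ J ?s (\<phi> a) = 0" by simp
      qed
      ultimately show ?thesis by blast
    qed
  qed
  show ?thesis
  proof (cases "\<exists>v w. ?P v w")
    case True then show ?thesis .
  next
    case False
    then obtain r s where "r \<in> GJ J" "r \<notin> A" "\<forall>a\<in>A. omegaJ J r a = 0"
      "s \<in> GJ J" "s \<notin> ?B" "\<forall>a\<in>A. omegaJ J s (\<phi> a) = 0"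
      using one two by blast
    then have "?P r s" by simp
    then show ?thesis by blast
  qed
qed


lemma adj_cases:
  assumes "x \<in> adj v A"
  obtains "x \<in> A" | a where "a \<in> A" "x = vadd v a" "x \<notin> A"
  using assms unfolding adj_def by blast

lemma iso_adj:
  assumes A: "subsp J A" and iso: "iso J A \<phi>"
    and v: "v \<in> GJ J" "v \<notin> A" and w: "w \<in> GJ J" "w \<notin> \<phi> ` A"
    and pair: "\<forall>a\<in>A. omegaJ J w (\<phi> a) = omegaJ J v a"
  shows "iso J (adj v A) (\<lambda>x. if x \<in> A then \<phi> x else vadd w (\<phi> (vadd v x)))"
proof -
  let ?f = "\<lambda>x. if x \<in> A then \<phi> x else vadd w (\<phi> (vadd v x))"
  have AV: "A \<subseteq> GJ J" using A by (simp add: subsp_def)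
  have Acl: "\<And>x y. x \<in> A \<Longrightarrow> y \<in> A \<Longrightarrow> vadd x y \<in> A" using A by (simp add: subsp_def)
  have inj: "inj_on \<phi> A" and ad: "\<And>x y. x\<in>A \<Longrightarrow> y\<in>A \<Longrightarrow> \<phi> (vadd x y) = vadd (\<phi> x) (\<phi> y)"
    and om: "\<And>x y. x\<in>A \<Longrightarrow> y\<in>A \<Longrightarrow> omegaJ J (\<phi> x) (\<phi> y) = omegaJ J x y"
    and img: "\<phi> ` A \<subseteq> GJ J"
    using iso by (auto simp: iso_def addp_def)
  have pair': "\<And>a. a \<in> A \<Longrightarrow> omegaJ J (\<phi> a) w = omegaJ J a v"
    using pair by (metis omega_sym)
  have out: "\<And>a. a \<in> A \<Longrightarrow> vadd v a \<notin> A"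
    using Acl v(2) by (metis vadd_cancel(2))
  have fo: "\<And>a. a \<in> A \<Longrightarrow> ?f (vadd v a) = vadd w (\<phi> a)"
    using out by simp
  have fi: "\<And>a. a \<in> A \<Longrightarrow> ?f a = \<phi> a" by simp
  have wB: "\<And>a. a \<in> A \<Longrightarrow> vadd w (\<phi> a) \<notin> \<phi> ` A"
  proof
    fix a assume a: "a \<in> A" and "vadd w (\<phi> a) \<in> \<phi> ` A"
    then obtain b where b: "b \<in> A" "vadd w (\<phi> a) = \<phi> b" by blast
    then have "w = vadd (\<phi> b) (\<phi> a)" by (metis vadd_cancel(2))
    also have "\<dots> = \<phi> (vadd b a)" using ad a b by simp
    finally show False using w(2) Acl a b by blast
  qed
  have "addp (adj v A) ?f"
    unfolding addp_def
  proof (intro ballI)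
    fix x y assume x: "x \<in> adj v A" and y: "y \<in> adj v A"
    show "?f (vadd x y) = vadd (?f x) (?f y)"
    proof (cases rule: adj_cases[OF x])
      case 1
      then show ?thesis
      proof (cases rule: adj_cases[OF y])
        case 1 then show ?thesis using \<open>x \<in> A\<close> Acl ad by simp
      next
        case (2 b)
        have e: "vadd x y = vadd v (vadd x b)" using 2 by (simp add: vadd_ac)
        have xb: "vadd x b \<in> A" using Acl \<open>x \<in> A\<close> 2 by blast
        have "?f (vadd x y) = vadd w (vadd (\<phi> x) (\<phi> b))"
          unfolding e fo[OF xb] ad[OF \<open>x \<in> A\<close> 2(1)] ..
        moreover have "vadd (?f x) (?f y) = vadd (\<phi> x) (vadd w (\<phi> b))"
          unfolding 2(2) fo[OF 2(1)] fi[OF \<open>x \<in> A\<close>] ..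
        ultimately show ?thesis by (simp add: vadd_ac)
      qed
    next
      case (2 a)
      note xa = 2
      then show ?thesis
      proof (cases rule: adj_cases[OF y])
        case 1
        have e: "vadd x y = vadd v (vadd a y)" using 2 by (simp add: vadd_ac)
        have ay: "vadd a y \<in> A" using Acl \<open>y \<in> A\<close> 2 by blast
        have "?f (vadd x y) = vadd w (vadd (\<phi> a) (\<phi> y))"
          unfolding e fo[OF ay] ad[OF 2(1) \<open>y \<in> A\<close>] ..
        moreover have "vadd (?f x) (?f y) = vadd (vadd w (\<phi> a)) (\<phi> y)"
          unfolding 2(2) fo[OF 2(1)] fi[OF \<open>y \<in> A\<close>] ..
        ultimately show ?thesis by (simp add: vadd_ac)
      next
        case (2 b)
        have e: "vadd x y = vadd a b" using xa 2 by (simp add: vadd_ac)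
        have ab: "vadd a b \<in> A" using Acl xa 2 by blast
        have "?f (vadd x y) = vadd (\<phi> a) (\<phi> b)"
          unfolding e using ab ad[OF xa(1) 2(1)] by simp
        moreover have "vadd (?f x) (?f y) = vadd (vadd w (\<phi> a)) (vadd w (\<phi> b))"
          unfolding xa(2) 2(2) fo[OF xa(1)] fo[OF 2(1)] ..
        ultimately show ?thesis by (simp add: vadd_ac)
      qed
    qed
  qed
  moreover have "inj_on ?f (adj v A)"
  proof (rule inj_onI)
    fix x y assume x: "x \<in> adj v A" and y: "y \<in> adj v A" and e: "?f x = ?f y"
    show "x = y"
    proof (cases rule: adj_cases[OF x])
      case 1
      then show ?thesis
      proof (cases rule: adj_cases[OF y])
        case 1 then show ?thesis using \<open>x \<in> A\<close> e inj by (simp add: inj_on_def)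
      next
        case (2 b)
        then show ?thesis using e \<open>x \<in> A\<close> fo wB by force
      qed
    next
      case (2 a)
      note xa = 2
      then show ?thesis
      proof (cases rule: adj_cases[OF y])
        case 1
        then show ?thesis using e 2 fo wB by force
      next
        case (2 b)
        then have "vadd w (\<phi> a) = vadd w (\<phi> b)" using e xa 2 fo by simp
        then have "\<phi> a = \<phi> b" by (metis vadd_cancel(1))
        then have "a = b" using xa 2 inj by (simp add: inj_on_def)
        then show ?thesis using xa 2 by simp
      qed
    qed
  qed
  moreover have "?f ` adj v A \<subseteq> GJ J"
  proof
    fix y assume "y \<in> ?f ` adj v A"
    then obtain x where x: "x \<in> adj v A" "y = ?f x" by blast
    show "y \<in> GJ J"
    proof (cases rule: adj_cases[OF x(1)])
      case 1 then show ?thesis using x img by auto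
    next
      case (2 a) then show ?thesis using x fo img w(1) GJ_vadd by auto
    qed
  qed
  moreover have "\<forall>x\<in>adj v A. \<forall>y\<in>adj v A. omegaJ J (?f x) (?f y) = omegaJ J x y"
  proof (intro ballI)
    fix x y assume x: "x \<in> adj v A" and y: "y \<in> adj v A"
    show "omegaJ J (?f x) (?f y) = omegaJ J x y"
    proof (cases rule: adj_cases[OF x])
      case 1
      then show ?thesis
      proof (cases rule: adj_cases[OF y])
        case 1 then show ?thesis using \<open>x \<in> A\<close> om by simp
      next
        case (2 b)
        have "omegaJ J (?f x) (?f y) = omegaJ J (\<phi> x) w + omegaJ J (\<phi> x) (\<phi> b)"
          using 2 fo \<open>x \<in> A\<close> by (simp add: omega_add_right)
        also have "\<dots> = omegaJ J x v + omegaJ J x b" using pair' om \<open>x \<in> A\<close> 2 by simp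
        also have "\<dots> = omegaJ J x y" using 2 by (simp add: omega_add_right)
        finally show ?thesis .
      qed
    next
      case (2 a)
      note xa = 2
      then show ?thesis
      proof (cases rule: adj_cases[OF y])
        case 1
        have "omegaJ J (?f x) (?f y) = omegaJ J w (\<phi> y) + omegaJ J (\<phi> a) (\<phi> y)"
          using 2 fo \<open>y \<in> A\<close> by (simp add: omega_add_left)
        also have "\<dots> = omegaJ J v y + omegaJ J a y" using pair om \<open>y \<in> A\<close> 2 by simp
        also have "\<dots> = omegaJ J x y" using 2 by (simp add: omega_add_left)
        finally show ?thesis .
      next
        case (2 b)
        have "omegaJ J (?f x) (?f y) = omegaJ J w w + omegaJ J w (\<phi> b) + (omegaJ J (\<phi> a) w + omegaJ J (\<phi> a) (\<phi> b))"
          using xa 2 fo by (simp add: omega_add_left omega_add_right)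
        also have "\<dots> = omegaJ J v v + omegaJ J v b + (omegaJ J a v + omegaJ J a b)"
          using pair pair' om xa 2 by simp
        also have "\<dots> = omegaJ J x y" using xa 2 by (simp add: omega_add_left omega_add_right)
        finally show ?thesis .
      qed
    qed
  qed
  ultimately show ?thesis by (simp add: iso_def)
qed


lemma witt:
  assumes J: "finite J" and A: "subsp J A" and iso: "iso J A \<phi>"
  shows "\<exists>u\<in>SpJ J. \<forall>a\<in>A. u a = \<phi> a"
proof -
  let ?Q = "\<lambda>B. subsp J B \<and> A \<subseteq> B \<and> (\<exists>\<psi>. iso J B \<psi> \<and> (\<forall>a\<in>A. \<psi> a = \<phi> a))"
  have "?Q (GJ J)"
  proof (rule grow[where Q = ?Q])
    show "finite (GJ J)" using J by (rule finite_GJ)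
    show "?Q A" using A iso by blast
    show "A \<subseteq> GJ J" using A by (simp add: subsp_def)
    fix B assume Q: "?Q B" and BV: "B \<subseteq> GJ J" "B \<noteq> GJ J"
    then obtain \<psi> where \<psi>: "iso J B \<psi>" "\<forall>a\<in>A. \<psi> a = \<phi> a" by blast
    obtain v w where vw: "v \<in> GJ J" "v \<notin> B" "w \<in> GJ J" "w \<notin> \<psi> ` B"
      "\<forall>a\<in>B. omegaJ J w (\<psi> a) = omegaJ J v a"
      using witt_pair[OF J _ BV(2) \<psi>(1)] Q by blast
    have s: "subsp J (adj v B)" "B \<subset> adj v B" using adj_props[of J B v] Q vw by auto
    have i: "iso J (adj v B) (\<lambda>x. if x \<in> B then \<psi> x else vadd w (\<psi> (vadd v x)))"
      using iso_adj[of J B \<psi> v w] Q \<psi> vw by blast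
    have "\<forall>a\<in>A. (\<lambda>x. if x \<in> B then \<psi> x else vadd w (\<psi> (vadd v x))) a = \<phi> a"
      using Q \<psi>(2) by auto
    then have "?Q (adj v B)" using s i Q by blast
    then show "\<exists>A'. B \<subset> A' \<and> A' \<subseteq> GJ J \<and> ?Q A'"
      using s by (auto simp: subsp_def)
  qed
  then obtain \<psi> where \<psi>: "iso J (GJ J) \<psi>" "\<forall>a\<in>A. \<psi> a = \<phi> a" by blast
  have inj: "inj_on \<psi> (GJ J)" and img: "\<psi> ` GJ J \<subseteq> GJ J" and ad: "addp (GJ J) \<psi>"
    and om: "\<forall>f\<in>GJ J. \<forall>g\<in>GJ J. omegaJ J (\<psi> f) (\<psi> g) = omegaJ J f g"
    using \<psi>(1) by (auto simp: iso_def)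
  have fin: "finite (GJ J)" using J by (rule finite_GJ)
  have "\<psi> ` GJ J = GJ J"
    using card_subset_eq[OF fin img] card_image[OF inj] by simp
  then have bij: "bij_betw \<psi> (GJ J) (GJ J)" using inj by (simp add: bij_betw_def)
  have z: "\<psi> zerov = zerov" using addp_zero[OF ad GJ_zero] .
  have lin: "linear_on (GJ J) \<psi>"
    unfolding linear_on_def
  proof (intro conjI allI ballI)
    fix f g assume "f \<in> GJ J" "g \<in> GJ J"
    then show "\<psi> (vadd f g) = vadd (\<psi> f) (\<psi> g)" using ad by (simp add: addp_def)
  next
    fix c :: bit and f assume "f \<in> GJ J"
    show "\<psi> (smul c f) = smul c (\<psi> f)" using z by (cases c) auto
  qed
  have "\<psi> \<in> SpJ J" using bij lin om by (simp add: SpJ_def)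
  then show ?thesis using \<psi>(2) by blast
qed


lemma qubits_finite: "finite (qubits n own \<alpha>)"
  by (rule finite_subset[of _ "{..<n}"]) (auto simp: qubits_def)

lemma qubits_own: "j < n \<Longrightarrow> j \<in> qubits n own (own j)"
  by (simp add: qubits_def)

lemma eq_by_parts:
  assumes "x \<in> Gn n" "y \<in> Gn n" "\<forall>j<n. own j \<in> M"
    and "\<forall>\<alpha>\<in>M. restr (qubits n own \<alpha>) x = restr (qubits n own \<alpha>) y"
  shows "x = y"
proof
  fix j
  show "x j = y j"
  proof (cases "j < n")
    case True
    then have "restr (qubits n own (own j)) x j = restr (qubits n own (own j)) y j"
      using assms(3,4) by metis
    then show ?thesis using True by (simp add: restr_def qubits_def)
  next
    case False
    then show ?thesis using assms(1,2) by (simp add: GJ_def)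
  qed
qed

lemma dsum_in: "dsum n own u f \<in> Gn n"
  by (simp add: dsum_def GJ_def)

lemma dsum_restr:
  assumes "u \<alpha> ` GJ (qubits n own \<alpha>) \<subseteq> GJ (qubits n own \<alpha>)"
  shows "restr (qubits n own \<alpha>) (dsum n own u f) = u \<alpha> (restr (qubits n own \<alpha>) f)"
proof (rule ext)
  fix j
  have inG: "u \<alpha> (restr (qubits n own \<alpha>) f) \<in> GJ (qubits n own \<alpha>)"
    by (rule subsetD[OF assms imageI[OF restr_GJ]])
  show "restr (qubits n own \<alpha>) (dsum n own u f) j = u \<alpha> (restr (qubits n own \<alpha>) f) j"
  proof (cases "j \<in> qubits n own \<alpha>")
    case True
    have jn: "j < n" "own j = \<alpha>" using True by (simp_all add: qubits_def)
    have "restr (qubits n own \<alpha>) (dsum n own u f) j = dsum n own u f j"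
      using True by (simp add: restr_def)
    also have "\<dots> = u \<alpha> (restr (qubits n own \<alpha>) f) j"
      using jn unfolding dsum_def by simp
    finally show ?thesis .
  next
    case False
    then show ?thesis using inG by (simp add: restr_def GJ_def)
  qed
qed

lemma Sp_props:
  assumes "u \<in> SpJ J"
  shows "u ` GJ J \<subseteq> GJ J" "inj_on u (GJ J)" "u zerov = zerov"
    "\<And>f g. f \<in> GJ J \<Longrightarrow> g \<in> GJ J \<Longrightarrow> u (vadd f g) = vadd (u f) (u g)"
    "\<And>f g. f \<in> GJ J \<Longrightarrow> g \<in> GJ J \<Longrightarrow> omegaJ J (u f) (u g) = omegaJ J f g"
proof -
  have b: "bij_betw u (GJ J) (GJ J)" and l: "linear_on (GJ J) u"
    and o: "\<forall>f\<in>GJ J. \<forall>g\<in>GJ J. omegaJ J (u f) (u g) = omegaJ J f g"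
    using assms by (auto simp: SpJ_def)
  show "u ` GJ J \<subseteq> GJ J" "inj_on u (GJ J)" using b by (auto simp: bij_betw_def)
  have "u (smul 0 zerov) = smul 0 (u zerov)" using l GJ_zero unfolding linear_on_def by blast
  then show "u zerov = zerov" by simp
  show "\<And>f g. f \<in> GJ J \<Longrightarrow> g \<in> GJ J \<Longrightarrow> u (vadd f g) = vadd (u f) (u g)"
    using l by (simp add: linear_on_def)
  show "\<And>f g. f \<in> GJ J \<Longrightarrow> g \<in> GJ J \<Longrightarrow> omegaJ J (u f) (u g) = omegaJ J f g"
    using o by blast
qed

lemma lin_sub_props:
  assumes "lin_subspace n S"
  shows "S \<subseteq> Gn n" "zerov \<in> S" "\<And>f g. f \<in> S \<Longrightarrow> g \<in> S \<Longrightarrow> vadd f g \<in> S"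
  using assms by (auto simp: lin_subspace_def)

lemma dir1:
  fixes M :: "'p set" and own :: "nat \<Rightarrow> 'p" and n :: nat and S S' :: "pvec set"
  assumes own: "\<forall>j<n. own j \<in> M"
    and LS: "lin_subspace n S" and LS': "lin_subspace n S'"
    and u: "\<forall>\<alpha>\<in>M. u \<alpha> \<in> SpJ (qubits n own \<alpha>)" and S': "S' = dsum n own u ` S"
  shows "\<exists>T. bij_betw T S S' \<and> linear_on S T \<and>
        (\<forall>f\<in>S. \<forall>g\<in>S. \<forall>\<alpha>\<in>M.
           omegaJ (qubits n own \<alpha>) (T f) (T g) = omegaJ (qubits n own \<alpha>) f g) \<and>
        (\<forall>\<alpha>\<in>M. T ` coloc n own S \<alpha> = coloc n own S' \<alpha>)"
proof -
  let ?T = "dsum n own u"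
  let ?Q = "qubits n own"
  have SG: "S \<subseteq> Gn n" using lin_sub_props[OF LS] by blast
  have key: "restr (?Q \<alpha>) (?T f) = u \<alpha> (restr (?Q \<alpha>) f)" if "\<alpha> \<in> M" for \<alpha> f
    using dsum_restr[where u=u and \<alpha>=\<alpha> and n=n and own=own, OF Sp_props(1)[OF u[rule_format, OF that]]] .
  have uz: "u \<alpha> zerov = zerov" if "\<alpha> \<in> M" for \<alpha>
    using Sp_props(3)[OF u[rule_format, OF that]] .
  have Tz: "?T zerov = zerov"
    by (rule eq_by_parts[OF dsum_in GJ_zero own]) (simp add: key uz)
  have Tadd: "?T (vadd f g) = vadd (?T f) (?T g)" for f g
  proof (rule eq_by_parts[OF dsum_in GJ_vadd[OF dsum_in dsum_in] own], intro ballI)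
    fix \<alpha> assume a: "\<alpha> \<in> M"
    have "restr (?Q \<alpha>) (?T (vadd f g)) = u \<alpha> (vadd (restr (?Q \<alpha>) f) (restr (?Q \<alpha>) g))"
      using key[OF a] by (simp add: restr_vadd)
    also have "\<dots> = vadd (u \<alpha> (restr (?Q \<alpha>) f)) (u \<alpha> (restr (?Q \<alpha>) g))"
      using Sp_props(4)[OF u[rule_format, OF a]] by simp
    also have "\<dots> = restr (?Q \<alpha>) (vadd (?T f) (?T g))"
      using key[OF a] by (simp add: restr_vadd)
    finally show "restr (?Q \<alpha>) (?T (vadd f g)) = restr (?Q \<alpha>) (vadd (?T f) (?T g))" .
  qed
  have lin: "linear_on S ?T"
    unfolding linear_on_def
  proof (intro conjI allI ballI)
    fix c :: bit and f show "?T (smul c f) = smul c (?T f)" using Tz by (cases c) auto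
  qed (simp add: Tadd)
  have inj: "inj_on ?T S"
  proof (rule inj_onI)
    fix f g assume f: "f \<in> S" and g: "g \<in> S" and e: "?T f = ?T g"
    show "f = g"
    proof (rule eq_by_parts[OF _ _ own])
      show "f \<in> Gn n" "g \<in> Gn n" using f g SG by auto
      show "\<forall>\<alpha>\<in>M. restr (?Q \<alpha>) f = restr (?Q \<alpha>) g"
      proof
        fix \<alpha> assume a: "\<alpha> \<in> M"
        have "u \<alpha> (restr (?Q \<alpha>) f) = u \<alpha> (restr (?Q \<alpha>) g)" using key[OF a] e by metis
        then show "restr (?Q \<alpha>) f = restr (?Q \<alpha>) g"
          using Sp_props(2)[OF u[rule_format, OF a]] by (simp add: inj_on_def)
      qed
    qed
  qed
  have bij: "bij_betw ?T S S'" using inj S' by (simp add: bij_betw_def)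
  have om: "\<forall>f\<in>S. \<forall>g\<in>S. \<forall>\<alpha>\<in>M. omegaJ (?Q \<alpha>) (?T f) (?T g) = omegaJ (?Q \<alpha>) f g"
  proof (intro ballI)
    fix f g \<alpha> assume "f \<in> S" "g \<in> S" and a: "\<alpha> \<in> M"
    have "omegaJ (?Q \<alpha>) (?T f) (?T g) = omegaJ (?Q \<alpha>) (restr (?Q \<alpha>) (?T f)) (restr (?Q \<alpha>) (?T g))"
      by (simp add: restr_omega)
    also have "\<dots> = omegaJ (?Q \<alpha>) (restr (?Q \<alpha>) f) (restr (?Q \<alpha>) g)"
      using key[OF a] Sp_props(5)[OF u[rule_format, OF a]] by simp
    also have "\<dots> = omegaJ (?Q \<alpha>) f g" by (simp add: restr_omega)
    finally show "omegaJ (?Q \<alpha>) (?T f) (?T g) = omegaJ (?Q \<alpha>) f g" .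
  qed
  have col: "\<forall>\<alpha>\<in>M. ?T ` coloc n own S \<alpha> = coloc n own S' \<alpha>"
  proof
    fix \<alpha> assume a: "\<alpha> \<in> M"
    note U = Sp_props[OF u[rule_format, OF a]]
    show "?T ` coloc n own S \<alpha> = coloc n own S' \<alpha>"
    proof
      show "?T ` coloc n own S \<alpha> \<subseteq> coloc n own S' \<alpha>"
        using key[OF a] U(3) S' by (auto simp: coloc_def)
    next
      show "coloc n own S' \<alpha> \<subseteq> ?T ` coloc n own S \<alpha>"
      proof
        fix g assume g: "g \<in> coloc n own S' \<alpha>"
        then obtain f where f: "f \<in> S" "g = ?T f" using S' by (auto simp: coloc_def)
        have "u \<alpha> (restr (?Q \<alpha>) f) = u \<alpha> zerov"
          using g f key[OF a] U(3) by (simp add: coloc_def)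
        then have "restr (?Q \<alpha>) f = zerov"
          using U(2) by (simp add: inj_on_def)
        then have "f \<in> coloc n own S \<alpha>" using f by (simp add: coloc_def)
        then show "g \<in> ?T ` coloc n own S \<alpha>" using f by blast
      qed
    qed
  qed
  show ?thesis using bij lin om col by blast
qed


lemma dir2:
  fixes M :: "'p set" and own :: "nat \<Rightarrow> 'p" and n :: nat and S S' :: "pvec set"
  assumes own: "\<forall>j<n. own j \<in> M"
    and LS: "lin_subspace n S" and LS': "lin_subspace n S'"
    and bij: "bij_betw T S S'" and lin: "linear_on S T"
    and om: "\<forall>f\<in>S. \<forall>g\<in>S. \<forall>\<alpha>\<in>M.
           omegaJ (qubits n own \<alpha>) (T f) (T g) = omegaJ (qubits n own \<alpha>) f g"
    and col: "\<forall>\<alpha>\<in>M. T ` coloc n own S \<alpha> = coloc n own S' \<alpha>"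
  shows "\<exists>u. (\<forall>\<alpha>\<in>M. u \<alpha> \<in> SpJ (qubits n own \<alpha>)) \<and> S' = dsum n own u ` S"
proof -
  let ?Q = "qubits n own"
  have SG: "S \<subseteq> Gn n" and Sz: "zerov \<in> S" and Scl: "\<And>f g. f \<in> S \<Longrightarrow> g \<in> S \<Longrightarrow> vadd f g \<in> S"
    using lin_sub_props[OF LS] by blast+
  have S'G: "S' \<subseteq> Gn n" using lin_sub_props[OF LS'] by blast
  have TS: "T ` S = S'" and Tinj: "inj_on T S" using bij by (auto simp: bij_betw_def)
  have Tadd: "\<And>f g. f \<in> S \<Longrightarrow> g \<in> S \<Longrightarrow> T (vadd f g) = vadd (T f) (T g)"
    using lin by (simp add: linear_on_def)
  have loc: "\<exists>v\<in>SpJ (?Q \<alpha>). \<forall>f\<in>S. v (restr (?Q \<alpha>) f) = restr (?Q \<alpha>) (T f)" if a: "\<alpha> \<in> M" for \<alpha>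
  proof -
    let ?J = "?Q \<alpha>"
    let ?A = "restr ?J ` S"
    let ?\<phi> = "\<lambda>x. restr ?J (T (SOME f. f \<in> S \<and> restr ?J f = x))"
    have colS: "T ` coloc n own S \<alpha> = coloc n own S' \<alpha>" using col a by blast
    have wd: "restr ?J (T f) = restr ?J (T g)" if "f \<in> S" "g \<in> S" "restr ?J f = restr ?J g" for f g
    proof -
      have "restr ?J (vadd f g) = zerov" using that by (simp add: restr_vadd)
      then have "vadd f g \<in> coloc n own S \<alpha>" using Scl that by (simp add: coloc_def)
      then have "T (vadd f g) \<in> coloc n own S' \<alpha>" using colS by blast
      then have "restr ?J (vadd (T f) (T g)) = zerov" using Tadd that by (simp add: coloc_def)
      then show ?thesis by (simp add: restr_vadd vadd_eq_zero_iff)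
    qed
    have phi: "?\<phi> (restr ?J f) = restr ?J (T f)" if "f \<in> S" for f
    proof -
      have ex: "\<exists>g. g \<in> S \<and> restr ?J g = restr ?J f" using that by blast
      have "(SOME g. g \<in> S \<and> restr ?J g = restr ?J f) \<in> S \<and>
            restr ?J (SOME g. g \<in> S \<and> restr ?J g = restr ?J f) = restr ?J f"
        using someI_ex[OF ex] .
      then show ?thesis using wd that by blast
    qed
    have sub: "subsp ?J ?A"
      unfolding subsp_def
    proof (intro conjI ballI)
      show "?A \<subseteq> GJ ?J" by auto
      show "zerov \<in> ?A" using Sz restr_zero by (metis image_eqI)
      fix x y assume "x \<in> ?A" "y \<in> ?A"
      then obtain f g where "f \<in> S" "g \<in> S" "x = restr ?J f" "y = restr ?J g" by blast
      then show "vadd x y \<in> ?A" using Scl by (metis restr_vadd image_eqI)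
    qed
    have iso: "iso ?J ?A ?\<phi>"
      unfolding iso_def
    proof (intro conjI)
      show "addp ?A ?\<phi>"
        unfolding addp_def
      proof (intro ballI)
        fix x y assume "x \<in> ?A" "y \<in> ?A"
        then obtain f g where fg: "f \<in> S" "g \<in> S" "x = restr ?J f" "y = restr ?J g" by blast
        have "?\<phi> (vadd x y) = ?\<phi> (restr ?J (vadd f g))" using fg by (simp add: restr_vadd)
        also have "\<dots> = restr ?J (T (vadd f g))" using phi Scl fg by blast
        also have "\<dots> = vadd (?\<phi> x) (?\<phi> y)" using fg Tadd phi by (simp add: restr_vadd)
        finally show "?\<phi> (vadd x y) = vadd (?\<phi> x) (?\<phi> y)" .
      qed
      show "inj_on ?\<phi> ?A"
      proof (rule inj_onI)
        fix x y assume "x \<in> ?A" "y \<in> ?A" and e: "?\<phi> x = ?\<phi> y"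
        then obtain f g where fg: "f \<in> S" "g \<in> S" "x = restr ?J f" "y = restr ?J g" by blast
        have "restr ?J (T f) = restr ?J (T g)" using e fg phi by simp
        then have "restr ?J (T (vadd f g)) = zerov" using Tadd fg by (simp add: restr_vadd)
        moreover have "T (vadd f g) \<in> S'" using TS Scl fg by blast
        ultimately have "T (vadd f g) \<in> coloc n own S' \<alpha>" by (simp add: coloc_def)
        then obtain h where h: "h \<in> coloc n own S \<alpha>" "T (vadd f g) = T h" using colS by force
        have "h \<in> S" using h by (simp add: coloc_def)
        then have "vadd f g = h" using Tinj h(2) Scl fg by (simp add: inj_on_def)
        then have "restr ?J (vadd f g) = zerov" using h by (simp add: coloc_def)
        then show "x = y" using fg by (simp add: restr_vadd vadd_eq_zero_iff)
      qed
      show "?\<phi> ` ?A \<subseteq> GJ ?J" by auto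
      show "\<forall>x\<in>?A. \<forall>y\<in>?A. omegaJ ?J (?\<phi> x) (?\<phi> y) = omegaJ ?J x y"
      proof (intro ballI)
        fix x y assume "x \<in> ?A" "y \<in> ?A"
        then obtain f g where fg: "f \<in> S" "g \<in> S" "x = restr ?J f" "y = restr ?J g" by blast
        have "omegaJ ?J (?\<phi> x) (?\<phi> y) = omegaJ ?J (restr ?J (T f)) (restr ?J (T g))"
          using fg phi by simp
        also have "\<dots> = omegaJ ?J (T f) (T g)" by (simp add: restr_omega)
        also have "\<dots> = omegaJ ?J f g" using om fg a by blast
        also have "\<dots> = omegaJ ?J x y" using fg by (simp add: restr_omega)
        finally show "omegaJ ?J (?\<phi> x) (?\<phi> y) = omegaJ ?J x y" .
      qed
    qed
    obtain v where v: "v \<in> SpJ ?J" "\<forall>a\<in>?A. v a = ?\<phi> a"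
      using witt[OF qubits_finite sub iso] by blast
    show ?thesis using v phi by (intro bexI[of _ v]) auto
  qed
  then obtain U where U: "\<forall>\<alpha>\<in>M. U \<alpha> \<in> SpJ (?Q \<alpha>) \<and> (\<forall>f\<in>S. U \<alpha> (restr (?Q \<alpha>) f) = restr (?Q \<alpha>) (T f))"
    by metis
  have "dsum n own U f = T f" if f: "f \<in> S" for f
  proof (rule eq_by_parts[OF dsum_in _ own])
    show "T f \<in> Gn n" using f TS S'G by blast
    show "\<forall>\<alpha>\<in>M. restr (?Q \<alpha>) (dsum n own U f) = restr (?Q \<alpha>) (T f)"
    proof
    fix \<alpha> assume a: "\<alpha> \<in> M"
    have "restr (?Q \<alpha>) (dsum n own U f) = U \<alpha> (restr (?Q \<alpha>) f)"
      using dsum_restr[where u=U and \<alpha>=\<alpha> and n=n and own=own, OF Sp_props(1)] U a by blast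
    also have "\<dots> = restr (?Q \<alpha>) (T f)" using U a f by blast
    finally show "restr (?Q \<alpha>) (dsum n own U f) = restr (?Q \<alpha>) (T f)" .
    qed
  qed
  then have "dsum n own U ` S = T ` S" by (intro image_cong) auto
  then have "S' = dsum n own U ` S" using TS by simp
  then show ?thesis using U by blast
qed


theorem lemma1:
  fixes M :: "'p set" and own :: "nat \<Rightarrow> 'p" and n :: nat and S S' :: "pvec set"
  assumes "finite M"
    and "\<forall>j<n. own j \<in> M"
    and "lin_subspace n S" and "lin_subspace n S'"
  shows "(\<exists>u. (\<forall>\<alpha>\<in>M. u \<alpha> \<in> SpJ (qubits n own \<alpha>)) \<and> S' = dsum n own u ` S)
     \<longleftrightarrow>
     (\<exists>T. bij_betw T S S' \<and> linear_on S T \<and>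
        (\<forall>f\<in>S. \<forall>g\<in>S. \<forall>\<alpha>\<in>M.
           omegaJ (qubits n own \<alpha>) (T f) (T g) = omegaJ (qubits n own \<alpha>) f g) \<and>
        (\<forall>\<alpha>\<in>M. T ` coloc n own S \<alpha> = coloc n own S' \<alpha>))"
proof
  assume "\<exists>u. (\<forall>\<alpha>\<in>M. u \<alpha> \<in> SpJ (qubits n own \<alpha>)) \<and> S' = dsum n own u ` S"
  then obtain u where "\<forall>\<alpha>\<in>M. u \<alpha> \<in> SpJ (qubits n own \<alpha>)" "S' = dsum n own u ` S" by blast
  then show "\<exists>T. bij_betw T S S' \<and> linear_on S T \<and>
        (\<forall>f\<in>S. \<forall>g\<in>S. \<forall>\<alpha>\<in>M.
           omegaJ (qubits n own \<alpha>) (T f) (T g) = omegaJ (qubits n own \<alpha>) f g) \<and>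
        (\<forall>\<alpha>\<in>M. T ` coloc n own S \<alpha> = coloc n own S' \<alpha>)"
    using dir1[OF assms(2-4)] by blast
next
  assume "\<exists>T. bij_betw T S S' \<and> linear_on S T \<and>
        (\<forall>f\<in>S. \<forall>g\<in>S. \<forall>\<alpha>\<in>M.
           omegaJ (qubits n own \<alpha>) (T f) (T g) = omegaJ (qubits n own \<alpha>) f g) \<and>
        (\<forall>\<alpha>\<in>M. T ` coloc n own S \<alpha> = coloc n own S' \<alpha>)"
  then obtain T where "bij_betw T S S'" "linear_on S T"
    "\<forall>f\<in>S. \<forall>g\<in>S. \<forall>\<alpha>\<in>M.
           omegaJ (qubits n own \<alpha>) (T f) (T g) = omegaJ (qubits n own \<alpha>) f g"
    "\<forall>\<alpha>\<in>M. T ` coloc n own S \<alpha> = coloc n own S' \<alpha>" by blast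
  then show "\<exists>u. (\<forall>\<alpha>\<in>M. u \<alpha> \<in> SpJ (qubits n own \<alpha>)) \<and> S' = dsum n own u ` S"
    using dir2[OF assms(2-4)] by blast
qed

end
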